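(* There exists a constant $C>0$, depending only on $d,\kappa,\alpha,\chi$, such that for every $\delta>0$ and every $\xi\in\mathbb{R}^d$, $$\big|\omega_\delta(\xi)-\gamma|\xi|\big|\le C\delta|\xi|^2 .$$
   Context: Fix $d\ge1$, $\kappa\in(0,\infty)$, $\alpha\in(0,1)$, and $\chi\in L^\infty(\mathbb{R})$ with $\operatorname{supp}\chi\subset[-1,1]$, $0\le\chi\le1$, $\chi\equiv1$ on $[-\tfrac12,\tfrac12]$; $\chi_\delta(y)=\chi(|y|/\delta)$. $\omega_\delta(\xi)=\big(\frac{\kappa}{\delta^{2(1-\alpha)}}\int_{\mathbb{R}^d}\chi_\delta(y)\frac{1-\cos(y\cdot\xi)}{|y|^{d+2\alpha}}dy\big)^{1/2}$ and $\gamma=\big(\frac{\kappa}{2}\mathcal L^d(B_1)\int_0^1\chi(\rho)\rho^{1-2\alpha}d\rho\big)^{1/2}$, with $\mathcal L^d(B_1)$ the volume of the unit ball. *)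

theory Defs
  imports "HOL-Analysis.Analysis"
begin

definition omega_delta ::
  "real \<Rightarrow> real \<Rightarrow> (real \<Rightarrow> real) \<Rightarrow> real \<Rightarrow> 'a::euclidean_space \<Rightarrow> real" where
  "omega_delta \<kappa> \<alpha> chi \<delta> \<xi> =
     sqrt (\<kappa> / \<delta> powr (2 * (1 - \<alpha>)) *
       (LINT y|lborel. chi (norm y / \<delta>) * (1 - cos (y \<bullet> \<xi>))
                        / norm y powr (real DIM('a) + 2 * \<alpha>)))"

definition gamma_const ::
  "'a::euclidean_space itself \<Rightarrow> real \<Rightarrow> real \<Rightarrow> (real \<Rightarrow> real) \<Rightarrow> real" where
  "gamma_const _ \<kappa> \<alpha> chi =
     sqrt (\<kappa> / 2 * measure lborel (ball (0::'a) 1) *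
       (LBINT \<rho>=0..1. chi \<rho> * \<rho> powr (1 - 2 * \<alpha>)))"

end

theory Submission
  imports Defs "HOL-Analysis.Analysis"
begin


lemma one_minus_cos_ge: "x\<^sup>2 / 2 - x^4/24 \<le> 1 - cos (x::real)"
proof -
  obtain t where "cos x = (\<Sum>m<4. cos_coeff m * x ^ m) + (cos(t + 1/2 * real 4 * pi) / fact 4) * x ^ 4"
    using Maclaurin_cos_expansion[of x 4] by blast
  moreover have "(\<Sum>m<4. cos_coeff m * x ^ m) = 1 - x^2/2"
    by (simp add: cos_coeff_def lessThan_nat_numeral fact_numeral power2_eq_square)
  moreover have "cos(t + 1/2 * real 4 * pi) = cos t" 
  proof -
    have "t + 1/2 * real 4 * pi = t + 2*pi" by simp
    then show ?thesis by simp
  qed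
  ultimately have "cos x = 1 - x^2/2 + cos t * x^4 / 24"
    by (simp add: fact_numeral)
  moreover have h: "0 \<le> x^4" by (metis zero_le_power_eq_numeral even_numeral)
  have "cos t * x^4 \<le> 1 * x^4" by (rule mult_right_mono[OF cos_le_one h])
  ultimately show ?thesis by simp
qed
lemma one_minus_cos_le: "1 - cos (x::real) \<le> x\<^sup>2 / 2"
proof -
  obtain t where "cos x = (\<Sum>m<2. cos_coeff m * x ^ m) + (cos(t + 1/2 * real 2 * pi) / fact 2) * x ^ 2"
    using Maclaurin_cos_expansion[of x 2] by blast
  moreover have "(\<Sum>m<2. cos_coeff m * x ^ m) = 1"
    by (simp add: cos_coeff_def lessThan_nat_numeral)
  moreover have "cos(t + 1/2 * real 2 * pi) = - cos t" 
  proof -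
    have "t + 1/2 * real 2 * pi = t + pi" by simp
    then show ?thesis by simp
  qed
  ultimately have "cos x = 1 - cos t * x^2 / 2"
    by (simp add: fact_numeral)
  moreover have h: "0 \<le> x^2" by simp
  have "cos t * x^2 \<le> 1 * x^2" by (rule mult_right_mono[OF cos_le_one h])
  ultimately show ?thesis by simp
qed




lemma emeasure_cball_0:
  fixes a :: real
  shows "emeasure (lborel::'a::euclidean_space measure) (cball 0 a) =
     ennreal (if a < 0 then 0 else a ^ DIM('a) * measure lborel (ball (0::'a) 1))"
proof (cases "a < 0")
  case True then show ?thesis by simp
next
  case False
  have "emeasure (lborel::'a measure) (cball 0 a) = ennreal (measure lborel (cball (0::'a) a))"
    using emeasure_lborel_cball_finite[of "0::'a" a] by (subst emeasure_eq_ennreal_measure) auto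
  also have "measure lborel (cball (0::'a) a) = a ^ DIM('a) * measure lborel (ball (0::'a) 1)"
    using False content_ball_conv_unit_ball[of a "0::'a"] by (simp only: content_cball_conv_ball)
  finally show ?thesis using False by simp
qed

definition rad_w :: "'a::euclidean_space itself \<Rightarrow> real \<Rightarrow> ennreal" where
  "rad_w _ r = ennreal (real DIM('a) * measure lborel (ball (0::'a) 1) * r powr (real DIM('a) - 1)) * indicator {0..} r"

lemma rad_w_measurable[measurable]: "rad_w TYPE('a::euclidean_space) \<in> borel_measurable borel"
  unfolding rad_w_def by measurable

lemma emeasure_rad_w:
  fixes a :: real
  shows "emeasure (density lborel (rad_w TYPE('a::euclidean_space))) {..a} =
     ennreal (if a < 0 then 0 else a ^ DIM('a) * measure lborel (ball (0::'a) 1))"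
proof -
  let ?d = "real DIM('a)" let ?V = "measure lborel (ball (0::'a) 1)"
  have "emeasure (density lborel (rad_w TYPE('a))) {..a} = (\<integral>\<^sup>+ r. rad_w TYPE('a) r * indicator {..a} r \<partial>lborel)"
    by (subst emeasure_density) auto
  also have "\<dots> = (\<integral>\<^sup>+ r. ennreal (?d * ?V * r powr (?d - 1)) * indicator {0..a} r \<partial>lborel)"
    by (intro nn_integral_cong) (auto simp: rad_w_def split: split_indicator)
  also have "\<dots> = ennreal (if a < 0 then 0 else a ^ DIM('a) * ?V)"
  proof (cases "a < 0")
    case True then show ?thesis by simp
  next
    case False
    have "((\<lambda>r. r powr (?d - 1)) has_integral (a powr (?d - 1 + 1) / (?d - 1 + 1))) {0..a}"
      using False by (intro has_integral_powr_from_0) auto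
    then have "((\<lambda>r. ?d * ?V * r powr (?d - 1)) has_integral (?d * ?V * (a powr (?d - 1 + 1) / (?d - 1 + 1)))) {0..a}"
      by (rule has_integral_mult_right)
    then have "(\<integral>\<^sup>+ r. ennreal (?d * ?V * r powr (?d - 1)) * indicator {0..a} r \<partial>lborel)
       = ennreal (?d * ?V * (a powr (?d - 1 + 1) / (?d - 1 + 1)))"
      by (intro nn_integral_has_integral_lebesgue') auto
    also have "?d * ?V * (a powr (?d - 1 + 1) / (?d - 1 + 1)) = a ^ DIM('a) * ?V"
      using False by (simp add: powr_realpow')
    finally show ?thesis using False by simp
  qed
  finally show ?thesis .
qed

lemma distr_norm_lborel:
  "distr (lborel::'a::euclidean_space measure) borel norm = density lborel (rad_w TYPE('a))"
proof (rule measure_eqI_generator_eq[where E="range atMost" and \<Omega>=UNIV and A="\<lambda>i. {..real i}"])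
  show "Int_stable (range (atMost :: real \<Rightarrow> real set))"
    by (auto simp: Int_stable_def)
  show "range atMost \<subseteq> Pow (UNIV::real set)" by auto
  have b: "sets (borel::real measure) = sigma_sets UNIV (range atMost)"
    by (subst borel_eq_atMost) (simp add: sets_measure_of)
  show "sets (distr (lborel::'a measure) borel norm) = sigma_sets UNIV (range atMost)"
    using b by simp
  show "sets (density lborel (rad_w TYPE('a))) = sigma_sets UNIV (range atMost)"
    using b by simp
  show "range (\<lambda>i::nat. {..real i}) \<subseteq> range atMost" by auto
  show "(\<Union>i::nat. {..real i}) = UNIV"
    by (auto intro: real_arch_simple)
  have eq: "emeasure (distr (lborel::'a measure) borel norm) {..a} =
     ennreal (if a < 0 then 0 else a ^ DIM('a) * measure lborel (ball (0::'a) 1))" for a :: real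
  proof -
    have "norm -` {..a} \<inter> space lborel = cball (0::'a) a"
      by (auto simp: mem_cball)
    then show ?thesis
      by (subst emeasure_distr) (auto simp: emeasure_cball_0)
  qed
  show "emeasure (distr (lborel::'a measure) borel norm) X = emeasure (density lborel (rad_w TYPE('a))) X"
    if X: "X \<in> range atMost" for X
  proof -
    obtain a where "X = {..a}" using X by auto
    then show ?thesis using eq[of a] emeasure_rad_w[of a, where 'a='a] by simp
  qed
  show "emeasure (distr (lborel::'a measure) borel norm) {..real i} \<noteq> \<infinity>" for i
    using eq by simp
qed

lemma nn_integral_radial:
  assumes [measurable]: "g \<in> borel_measurable borel"
  shows "(\<integral>\<^sup>+ y. g (norm y) \<partial>(lborel::'a::euclidean_space measure)) =
         (\<integral>\<^sup>+ r. g r * rad_w TYPE('a) r \<partial>lborel)"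
proof -
  have "(\<integral>\<^sup>+ y. g (norm y) \<partial>(lborel::'a measure)) = (\<integral>\<^sup>+ r. g r \<partial>distr (lborel::'a measure) borel norm)"
    by (subst nn_integral_distr) auto
  also have "\<dots> = (\<integral>\<^sup>+ r. rad_w TYPE('a) r * g r \<partial>lborel)"
    unfolding distr_norm_lborel by (subst nn_integral_density) auto
  finally show ?thesis by (simp add: mult.commute)
qed




definition permT :: "('a \<Rightarrow> 'a) \<Rightarrow> 'a \<Rightarrow> 'a::euclidean_space" where
  "permT \<pi> x = (\<Sum>c\<in>Basis. (x \<bullet> \<pi> c) *\<^sub>R c)"

lemma permT_inner: "c \<in> Basis \<Longrightarrow> permT \<pi> x \<bullet> c = x \<bullet> \<pi> c"
  unfolding permT_def by (simp add: inner_sum_left inner_Basis if_distrib cong: if_cong)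

lemma permT_measurable[measurable]: "permT \<pi> \<in> borel_measurable borel"
  unfolding permT_def by measurable

lemma lborel_permT:
  assumes inv: "\<And>c. c \<in> Basis \<Longrightarrow> \<pi> c \<in> Basis \<and> \<pi> (\<pi> c) = c"
  shows "lborel = distr lborel borel (permT \<pi> :: 'a::euclidean_space \<Rightarrow> 'a)"
proof (rule lborel_eqI)
  fix l u :: 'a assume le: "\<And>b. b \<in> Basis \<Longrightarrow> l \<bullet> b \<le> u \<bullet> b"
  have bij: "bij_betw \<pi> Basis (Basis::'a set)"
    by (rule bij_betwI[where g=\<pi>]) (use inv in auto)
  have pre: "permT \<pi> -` box l u \<inter> space lborel = box (permT \<pi> l) (permT \<pi> u)"
  proof (intro set_eqI iffI)
    fix x :: 'a assume "x \<in> permT \<pi> -` box l u \<inter> space lborel"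
    then have x: "\<And>c. c \<in> Basis \<Longrightarrow> l \<bullet> c < x \<bullet> \<pi> c \<and> x \<bullet> \<pi> c < u \<bullet> c"
      by (auto simp: mem_box permT_inner)
    show "x \<in> box (permT \<pi> l) (permT \<pi> u)"
      unfolding mem_box
    proof safe
      fix e :: 'a assume e: "e \<in> Basis"
      then show "permT \<pi> l \<bullet> e < x \<bullet> e" "x \<bullet> e < permT \<pi> u \<bullet> e"
        using x[of "\<pi> e"] inv[of e] by (auto simp: permT_inner)
    qed
  next
    fix x :: 'a assume "x \<in> box (permT \<pi> l) (permT \<pi> u)"
    then have x: "\<And>e. e \<in> Basis \<Longrightarrow> l \<bullet> \<pi> e < x \<bullet> e \<and> x \<bullet> e < u \<bullet> \<pi> e"
      by (auto simp: mem_box permT_inner)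
    have "permT \<pi> x \<in> box l u"
      unfolding mem_box
    proof safe
      fix c :: 'a assume c: "c \<in> Basis"
      then show "l \<bullet> c < permT \<pi> x \<bullet> c" "permT \<pi> x \<bullet> c < u \<bullet> c"
        using x[of "\<pi> c"] inv[of c] by (auto simp: permT_inner)
    qed
    then show "x \<in> permT \<pi> -` box l u \<inter> space lborel" by simp
  qed
  have "emeasure (distr lborel borel (permT \<pi>)) (box l u) = emeasure lborel (box (permT \<pi> l) (permT \<pi> u))"
    by (subst emeasure_distr) (auto simp: pre[simplified])
  also have "\<dots> = (\<Prod>b\<in>Basis. (permT \<pi> u - permT \<pi> l) \<bullet> b)"
    using le inv by (simp add: emeasure_lborel_box_eq permT_inner inner_diff_left)
  also have "(\<Prod>b\<in>Basis. (permT \<pi> u - permT \<pi> l) \<bullet> b) = (\<Prod>b\<in>Basis. (u - l) \<bullet> \<pi> b)"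
    by (intro prod.cong) (auto simp: permT_inner inner_diff_left)
  also have "\<dots> = (\<Prod>b\<in>Basis. (u - l) \<bullet> b)"
    using prod.reindex_bij_betw[OF bij, of "\<lambda>b. (u - l) \<bullet> b"] by simp
  finally show "emeasure (distr lborel borel (permT \<pi>)) (box l u) = (\<Prod>b\<in>Basis. (u - l) \<bullet> b)" .
qed simp





lemma integral_invariant:
  fixes f :: "'a::euclidean_space \<Rightarrow> real"
  assumes "lborel = distr lborel borel T" "T \<in> borel_measurable borel" "f \<in> borel_measurable borel"
  shows "integral\<^sup>L lborel f = integral\<^sup>L lborel (\<lambda>x. f (T x))"
proof -
  have "integral\<^sup>L lborel f = integral\<^sup>L (distr lborel borel T) f"
    using assms(1) by simp
  also have "\<dots> = integral\<^sup>L lborel (\<lambda>x. f (T x))"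
    using assms(2,3) by (intro integral_distr) auto
  finally show ?thesis .
qed

lemma norm_permT:
  assumes inv: "\<And>c. c \<in> Basis \<Longrightarrow> \<pi> c \<in> Basis \<and> \<pi> (\<pi> c) = c"
  shows "norm (permT \<pi> x) = norm (x::'a::euclidean_space)"
proof -
  have bij: "bij_betw \<pi> Basis (Basis::'a set)"
    by (rule bij_betwI[where g=\<pi>]) (use inv in auto)
  have "permT \<pi> x \<bullet> permT \<pi> x = (\<Sum>b\<in>Basis. (x \<bullet> \<pi> b) * (x \<bullet> \<pi> b))"
    by (subst euclidean_inner) (simp add: permT_inner)
  also have "\<dots> = (\<Sum>b\<in>Basis. (x \<bullet> b) * (x \<bullet> b))"
    using sum.reindex_bij_betw[OF bij, of "\<lambda>b. (x \<bullet> b) * (x \<bullet> b)"] by simp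
  also have "\<dots> = x \<bullet> x" by (subst (3) euclidean_inner) simp
  finally show ?thesis by (simp add: norm_eq_sqrt_inner)
qed

definition reflT :: "'a \<Rightarrow> 'a \<Rightarrow> 'a::euclidean_space" where
  "reflT b x = (\<Sum>j\<in>Basis. ((if j = b then -1 else 1) * (x \<bullet> j)) *\<^sub>R j)"

lemma reflT_inner: "j \<in> Basis \<Longrightarrow> reflT b x \<bullet> j = (if j = b then -1 else 1) * (x \<bullet> j)"
  unfolding reflT_def by (simp add: inner_sum_left inner_Basis if_distrib cong: if_cong)

lemma reflT_measurable[measurable]: "reflT b \<in> borel_measurable borel"
  unfolding reflT_def by measurable

lemma norm_reflT: "norm (reflT b x) = norm (x::'a::euclidean_space)"
proof -
  have "reflT b x \<bullet> reflT b x = (\<Sum>j\<in>Basis. (x \<bullet> j) * (x \<bullet> j))"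
    by (subst euclidean_inner) (auto simp: reflT_inner intro!: sum.cong)
  also have "\<dots> = x \<bullet> x" by (subst (3) euclidean_inner) simp
  finally show ?thesis by (simp add: norm_eq_sqrt_inner)
qed

lemma lborel_reflT: "lborel = distr lborel borel (reflT (b::'a::euclidean_space))"
proof -
  have "lborel = density (distr lborel borel (\<lambda>x::'a. 0 + (\<Sum>j\<in>Basis. ((if j = b then -1 else 1) * (x \<bullet> j)) *\<^sub>R j)))
     (\<lambda>_. (\<Prod>j\<in>Basis. \<bar>if j = b then -1 else 1::real\<bar>))"
    by (rule lborel_affine_euclidean) auto
  also have "(\<lambda>x::'a. 0 + (\<Sum>j\<in>Basis. ((if j = b then -1 else 1) * (x \<bullet> j)) *\<^sub>R j)) = reflT b"
    by (simp add: reflT_def fun_eq_iff)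
  also have "(\<lambda>_. ennreal (\<Prod>j\<in>(Basis::'a set). \<bar>if j = b then -1 else 1::real\<bar>)) = (\<lambda>_. 1)"
    by (simp add: if_distrib cong: if_cong)
  finally show ?thesis by (simp add: density_1)
qed

context
  fixes F :: "real \<Rightarrow> real"
  assumes F[measurable]: "F \<in> borel_measurable borel"
  assumes Fint: "integrable lborel (\<lambda>y::'a::euclidean_space. F (norm y) * (norm y)^2)"
begin

lemma integrable_bb:
  "integrable lborel (\<lambda>y::'a. F (norm y) * ((y \<bullet> b) * (y \<bullet> b')))" if "b \<in> Basis" "b' \<in> Basis"
proof (rule Bochner_Integration.integrable_bound[OF Fint])
  show "AE y in lborel. norm (F (norm y) * ((y \<bullet> b) * (y \<bullet> b'))) \<le> norm (F (norm y) * (norm y)^2)"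
  proof (intro AE_I2)
    fix y :: 'a
    have "\<bar>y \<bullet> b\<bar> \<le> norm y" "\<bar>y \<bullet> b'\<bar> \<le> norm y"
      using that Basis_le_norm by auto
    then have "\<bar>(y \<bullet> b) * (y \<bullet> b')\<bar> \<le> norm y * norm y"
      by (simp add: abs_mult mult_mono)
    then show "norm (F (norm y) * ((y \<bullet> b) * (y \<bullet> b'))) \<le> norm (F (norm y) * (norm y)^2)"
      by (simp add: abs_mult power2_eq_square mult_left_mono)
  qed
qed measurable

lemma offdiag:
  assumes "b \<in> Basis" "b' \<in> Basis" "b \<noteq> b'"
  shows "integral\<^sup>L lborel (\<lambda>y::'a. F (norm y) * ((y \<bullet> b) * (y \<bullet> b'))) = 0"
proof -
  let ?I = "integral\<^sup>L lborel (\<lambda>y::'a. F (norm y) * ((y \<bullet> b) * (y \<bullet> b')))"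
  have "?I = integral\<^sup>L lborel (\<lambda>y::'a. F (norm (reflT b y)) * ((reflT b y \<bullet> b) * (reflT b y \<bullet> b')))"
    by (rule integral_invariant[OF lborel_reflT]) auto
  also have "\<dots> = integral\<^sup>L lborel (\<lambda>y::'a. - (F (norm y) * ((y \<bullet> b) * (y \<bullet> b'))))"
    using assms by (intro Bochner_Integration.integral_cong) (auto simp: norm_reflT reflT_inner)
  also have "\<dots> = - ?I" by simp
  finally show ?thesis by simp
qed

lemma diag:
  assumes b: "b \<in> Basis" and b0: "b0 \<in> Basis"
  shows "integral\<^sup>L lborel (\<lambda>y::'a. F (norm y) * ((y \<bullet> b) * (y \<bullet> b)))
       = integral\<^sup>L lborel (\<lambda>y::'a. F (norm y) * ((y \<bullet> b0) * (y \<bullet> b0)))"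
proof -
  define \<pi> where "\<pi> c = (if c = b then b0 else if c = b0 then b else c)" for c :: 'a
  have inv: "\<And>c. c \<in> Basis \<Longrightarrow> \<pi> c \<in> Basis \<and> \<pi> (\<pi> c) = c"
    using b b0 by (auto simp: \<pi>_def)
  have "integral\<^sup>L lborel (\<lambda>y::'a. F (norm y) * ((y \<bullet> b) * (y \<bullet> b))) =
     integral\<^sup>L lborel (\<lambda>y::'a. F (norm (permT \<pi> y)) * ((permT \<pi> y \<bullet> b) * (permT \<pi> y \<bullet> b)))"
    by (rule integral_invariant[OF lborel_permT[OF inv]]) auto
  also have "\<dots> = integral\<^sup>L lborel (\<lambda>y::'a. F (norm y) * ((y \<bullet> b0) * (y \<bullet> b0)))"
    using b by (intro Bochner_Integration.integral_cong) (auto simp: norm_permT[OF inv] permT_inner \<pi>_def)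
  finally show ?thesis .
qed

lemma sum_single_nz:
  assumes "finite A" "b \<in> A" "\<And>b'. b' \<in> A \<Longrightarrow> b' \<noteq> b \<Longrightarrow> g b' = 0"
  shows "sum g A = (g b :: real)"
proof -
  have "sum g A = g b + sum g (A - {b})" using assms by (simp add: sum.remove)
  also have "sum g (A - {b}) = 0" using assms by (intro sum.neutral) auto
  finally show ?thesis by simp
qed

lemma quad_formula:
  "integral\<^sup>L lborel (\<lambda>y::'a. F (norm y) * (y \<bullet> \<xi>)^2)
     = (norm \<xi>)^2 / real DIM('a) * integral\<^sup>L lborel (\<lambda>y::'a. F (norm y) * (norm y)^2)"
proof -
  obtain b0 :: 'a where b0: "b0 \<in> Basis" using nonempty_Basis by blast
  define M where "M = integral\<^sup>L lborel (\<lambda>y::'a. F (norm y) * ((y \<bullet> b0) * (y \<bullet> b0)))"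
  define I where "I b b' = integral\<^sup>L lborel (\<lambda>y::'a. F (norm y) * ((y \<bullet> b) * (y \<bullet> b')))" for b b' :: 'a
  have sq: "F (norm y) * (y \<bullet> \<xi>)^2 = (\<Sum>b\<in>Basis. \<Sum>b'\<in>Basis. (\<xi> \<bullet> b) * (\<xi> \<bullet> b') * (F (norm y) * ((y \<bullet> b) * (y \<bullet> b'))))" for y :: 'a
  proof -
    have "(y \<bullet> \<xi>)^2 = (\<Sum>b\<in>Basis. (y \<bullet> b) * (\<xi> \<bullet> b)) * (\<Sum>b'\<in>Basis. (y \<bullet> b') * (\<xi> \<bullet> b'))"
      by (simp only: power2_eq_square euclidean_inner[of y \<xi>])
    also have "\<dots> = (\<Sum>b\<in>Basis. \<Sum>b'\<in>Basis. ((y \<bullet> b) * (\<xi> \<bullet> b)) * ((y \<bullet> b') * (\<xi> \<bullet> b')))"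
      by (rule sum_product)
    finally show ?thesis by (simp add: sum_distrib_left mult_ac)
  qed
  have e1: "integral\<^sup>L lborel (\<lambda>y::'a. F (norm y) * (y \<bullet> \<xi>)^2)
     = integral\<^sup>L lborel (\<lambda>y::'a. \<Sum>b\<in>Basis. \<Sum>b'\<in>Basis. (\<xi> \<bullet> b) * (\<xi> \<bullet> b') * (F (norm y) * ((y \<bullet> b) * (y \<bullet> b'))))"
    by (simp only: sq)
  have e2: "integral\<^sup>L lborel (\<lambda>y::'a. \<Sum>b\<in>Basis. \<Sum>b'\<in>Basis. (\<xi> \<bullet> b) * (\<xi> \<bullet> b') * (F (norm y) * ((y \<bullet> b) * (y \<bullet> b'))))
      = (\<Sum>b\<in>Basis. integral\<^sup>L lborel (\<lambda>y::'a. \<Sum>b'\<in>Basis. (\<xi> \<bullet> b) * (\<xi> \<bullet> b') * (F (norm y) * ((y \<bullet> b) * (y \<bullet> b')))))"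
    by (subst Bochner_Integration.integral_sum) (auto intro!: integrable_sum integrable_mult_right integrable_bb)
  have e3: "integral\<^sup>L lborel (\<lambda>y::'a. \<Sum>b'\<in>Basis. (\<xi> \<bullet> b) * (\<xi> \<bullet> b') * (F (norm y) * ((y \<bullet> b) * (y \<bullet> b'))))
      = (\<xi> \<bullet> b) * (\<xi> \<bullet> b) * M" if b: "b \<in> Basis" for b
  proof -
    have "integral\<^sup>L lborel (\<lambda>y::'a. \<Sum>b'\<in>Basis. (\<xi> \<bullet> b) * (\<xi> \<bullet> b') * (F (norm y) * ((y \<bullet> b) * (y \<bullet> b'))))
      = (\<Sum>b'\<in>Basis. integral\<^sup>L lborel (\<lambda>y::'a. (\<xi> \<bullet> b) * (\<xi> \<bullet> b') * (F (norm y) * ((y \<bullet> b) * (y \<bullet> b')))))"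
      using b by (subst Bochner_Integration.integral_sum) (auto intro!: integrable_mult_right integrable_bb)
    also have "\<dots> = (\<Sum>b'\<in>Basis. (\<xi> \<bullet> b) * (\<xi> \<bullet> b') * I b b')"
      unfolding I_def by (rule sum.cong[OF refl]) (rule integral_mult_right_zero)
    also have "\<dots> = (\<xi> \<bullet> b) * (\<xi> \<bullet> b) * I b b"
      by (rule sum_single_nz) (use b in \<open>auto simp: I_def offdiag\<close>)
    also have "I b b = M" unfolding I_def M_def using b b0 by (rule diag)
    finally show ?thesis .
  qed
  have e4: "(\<Sum>b\<in>Basis. (\<xi> \<bullet> b) * (\<xi> \<bullet> b) * M) = (norm \<xi>)^2 * M"
    by (simp add: sum_distrib_right[symmetric] power2_norm_eq_inner euclidean_inner[of \<xi> \<xi>])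
  have 1: "integral\<^sup>L lborel (\<lambda>y::'a. F (norm y) * (y \<bullet> \<xi>)^2) = (norm \<xi>)^2 * M"
  proof -
    have e5: "(\<Sum>b\<in>Basis. integral\<^sup>L lborel (\<lambda>y::'a. \<Sum>b'\<in>Basis. (\<xi> \<bullet> b) * (\<xi> \<bullet> b') * (F (norm y) * ((y \<bullet> b) * (y \<bullet> b')))))
       = (\<Sum>b\<in>Basis. (\<xi> \<bullet> b) * (\<xi> \<bullet> b) * M)"
      by (rule sum.cong[OF refl]) (rule e3)
    show ?thesis by (simp only: e1 e2 e5 e4)
  qed
  have f1: "F (norm y) * (norm y)^2 = (\<Sum>b\<in>Basis. F (norm y) * ((y \<bullet> b) * (y \<bullet> b)))" for y :: 'a
    by (simp add: power2_norm_eq_inner euclidean_inner[of y y] sum_distrib_left)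
  have "integral\<^sup>L lborel (\<lambda>y::'a. F (norm y) * (norm y)^2)
     = integral\<^sup>L lborel (\<lambda>y::'a. \<Sum>b\<in>Basis. F (norm y) * ((y \<bullet> b) * (y \<bullet> b)))"
    by (simp only: f1)
  also have "\<dots> = (\<Sum>b\<in>(Basis::'a set). I b b)"
    unfolding I_def by (subst Bochner_Integration.integral_sum) (auto intro: integrable_bb)
  also have "\<dots> = (\<Sum>b\<in>(Basis::'a set). M)"
    unfolding I_def M_def using b0 by (intro sum.cong[OF refl] diag)
  also have "\<dots> = real DIM('a) * M" by simp
  finally have 2: "integral\<^sup>L lborel (\<lambda>y::'a. F (norm y) * (norm y)^2) = real DIM('a) * M" .
  have d: "real DIM('a) \<noteq> 0" by simp
  have "(norm \<xi>)^2 * M = (norm \<xi>)^2 / real DIM('a) * (real DIM('a) * M)"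
    using d by simp
  then show ?thesis by (simp only: 1 2)
qed

end




lemma J_props:
  fixes chi :: "real \<Rightarrow> real" and \<alpha> :: real
  assumes [measurable]: "chi \<in> borel_measurable borel"
    and nn: "\<And>x. 0 \<le> chi x" and le1: "\<And>x. chi x \<le> 1" and a: "\<alpha> < 1"
  shows "(\<integral>\<^sup>+\<rho>. ennreal (chi \<rho> * \<rho> powr (1 - 2*\<alpha>)) * indicator {0..1} \<rho> \<partial>lborel) < \<infinity>"
    and "(LBINT \<rho>=0..1. chi \<rho> * \<rho> powr (1 - 2*\<alpha>)) =
         enn2real (\<integral>\<^sup>+\<rho>. ennreal (chi \<rho> * \<rho> powr (1 - 2*\<alpha>)) * indicator {0..1} \<rho> \<partial>lborel)"
proof -
  have "(\<integral>\<^sup>+\<rho>. ennreal (chi \<rho> * \<rho> powr (1 - 2*\<alpha>)) * indicator {0..1} \<rho> \<partial>lborel)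
     \<le> (\<integral>\<^sup>+\<rho>. ennreal (\<rho> powr (1 - 2*\<alpha>)) * indicator {0..1} \<rho> \<partial>lborel)"
    by (intro nn_integral_mono mult_right_mono ennreal_leI)
       (auto simp: le1 nn mult_left_le_one_le)
  also have "\<dots> = ennreal (1 powr (1 - 2*\<alpha> + 1) / (1 - 2*\<alpha> + 1))"
    using a by (intro nn_integral_has_integral_lebesgue' has_integral_powr_from_0) auto
  finally show "(\<integral>\<^sup>+\<rho>. ennreal (chi \<rho> * \<rho> powr (1 - 2*\<alpha>)) * indicator {0..1} \<rho> \<partial>lborel) < \<infinity>"
    using le_less_trans by fastforce
  have "(LBINT \<rho>=0..1. chi \<rho> * \<rho> powr (1 - 2*\<alpha>)) = (LBINT \<rho>:{0..1}. chi \<rho> * \<rho> powr (1 - 2*\<alpha>))"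
    using interval_integral_Icc[of 0 1 "\<lambda>\<rho>. chi \<rho> * \<rho> powr (1 - 2*\<alpha>)"] by (simp add: zero_ereal_def one_ereal_def)
  also have "\<dots> = integral\<^sup>L lborel (\<lambda>\<rho>. chi \<rho> * \<rho> powr (1 - 2*\<alpha>) * indicator {0..1} \<rho>)"
    unfolding set_lebesgue_integral_def by (simp add: mult.commute)
  also have "\<dots> = enn2real (\<integral>\<^sup>+\<rho>. ennreal (chi \<rho> * \<rho> powr (1 - 2*\<alpha>) * indicator {0..1} \<rho>) \<partial>lborel)"
    by (rule integral_eq_nn_integral) (auto simp: nn)
  also have "(\<integral>\<^sup>+\<rho>. ennreal (chi \<rho> * \<rho> powr (1 - 2*\<alpha>) * indicator {0..1} \<rho>) \<partial>lborel)
     = (\<integral>\<^sup>+\<rho>. ennreal (chi \<rho> * \<rho> powr (1 - 2*\<alpha>)) * indicator {0..1} \<rho> \<partial>lborel)"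
    by (intro nn_integral_cong) (auto split: split_indicator)
  finally show "(LBINT \<rho>=0..1. chi \<rho> * \<rho> powr (1 - 2*\<alpha>)) =
         enn2real (\<integral>\<^sup>+\<rho>. ennreal (chi \<rho> * \<rho> powr (1 - 2*\<alpha>)) * indicator {0..1} \<rho> \<partial>lborel)" .
qed

lemma radial_J:
  fixes chi :: "real \<Rightarrow> real" and \<alpha> \<delta> :: real
  assumes [measurable]: "chi \<in> borel_measurable borel"
    and nn: "\<And>x. 0 \<le> chi x" and le1: "\<And>x. chi x \<le> 1" and a0: "0 < \<alpha>" and a: "\<alpha> < 1"
    and out: "\<And>x. \<bar>x\<bar> > 1 \<Longrightarrow> chi x = 0" and d: "0 < \<delta>"
  shows "(\<integral>\<^sup>+y. ennreal (chi (norm y / \<delta>) / norm y powr (real DIM('a) + 2*\<alpha>) * (norm y)^2) \<partial>(lborel::'a::euclidean_space measure))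
     = ennreal (real DIM('a) * measure lborel (ball (0::'a) 1) * \<delta> powr (2*(1-\<alpha>))) *
       (\<integral>\<^sup>+\<rho>. ennreal (chi \<rho> * \<rho> powr (1 - 2*\<alpha>)) * indicator {0..1} \<rho> \<partial>lborel)"
proof -
  define dV where "dV = real DIM('a) * measure lborel (ball (0::'a) 1)"
  have dV: "0 \<le> dV" by (simp add: dV_def)
  let ?\<beta> = "real DIM('a) + 2*\<alpha>"
  have "(\<integral>\<^sup>+y. ennreal (chi (norm y / \<delta>) / norm y powr ?\<beta> * (norm y)^2) \<partial>(lborel::'a measure))
      = (\<integral>\<^sup>+r. ennreal (chi (r / \<delta>) / r powr ?\<beta> * r^2) * rad_w TYPE('a) r \<partial>lborel)"
  proof -
    have m: "(\<lambda>r. ennreal (chi (r / \<delta>) / r powr ?\<beta> * r^2)) \<in> borel_measurable borel" by measurable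
    show ?thesis using nn_integral_radial[OF m, where 'a='a] by simp
  qed
  also have "\<dots> = (\<integral>\<^sup>+r. ennreal (dV * (chi (r / \<delta>) * r powr (1 - 2*\<alpha>))) * indicator {0..} r \<partial>lborel)"
  proof (intro nn_integral_cong)
    fix r :: real
    show "ennreal (chi (r / \<delta>) / r powr ?\<beta> * r^2) * rad_w TYPE('a) r
        = ennreal (dV * (chi (r / \<delta>) * r powr (1 - 2*\<alpha>))) * indicator {0..} r"
    proof (cases "r > 0")
      case True
      have "r powr (real DIM('a) - 1) * r^2 / r powr ?\<beta> = r powr (1 - 2*\<alpha>)"
      proof -
        have "r^2 = r powr 2" using True by (simp add: powr_numeral)
        then have "r powr (real DIM('a) - 1) * r^2 / r powr ?\<beta> = r powr ((real DIM('a) - 1) + 2 - ?\<beta>)"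
          using True by (simp only: powr_add powr_diff)
        also have "(real DIM('a) - 1) + 2 - ?\<beta> = 1 - 2*\<alpha>" by simp
        finally show ?thesis .
      qed
      then have "chi (r / \<delta>) / r powr ?\<beta> * r^2 * (dV * r powr (real DIM('a) - 1)) = dV * (chi (r / \<delta>) * r powr (1 - 2*\<alpha>))"
      proof -
        assume E: "r powr (real DIM('a) - 1) * r^2 / r powr ?\<beta> = r powr (1 - 2*\<alpha>)"
        have "chi (r / \<delta>) / r powr ?\<beta> * r^2 * (dV * r powr (real DIM('a) - 1))
           = dV * chi (r / \<delta>) * (r powr (real DIM('a) - 1) * r^2 / r powr ?\<beta>)"
          by (simp add: divide_inverse mult_ac)
        then show ?thesis using E by simp
      qed
      moreover have "0 \<le> chi (r / \<delta>) / r powr ?\<beta> * r^2" using nn by simp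
      ultimately show ?thesis using True dV
        by (simp add: rad_w_def dV_def ennreal_mult'[symmetric] mult.assoc)
    next
      case False
      then show ?thesis
        by (cases "r = 0") (auto simp: rad_w_def)
    qed
  qed
  also have "\<dots> = ennreal \<delta> * (\<integral>\<^sup>+\<rho>. ennreal (dV * (chi ((0 + \<delta> * \<rho>) / \<delta>) * (0 + \<delta> * \<rho>) powr (1 - 2*\<alpha>))) * indicator {0..} (0 + \<delta> * \<rho>) \<partial>lborel)"
    using d by (subst nn_integral_real_affine[where c=\<delta> and t=0]) auto
  also have "(\<integral>\<^sup>+\<rho>. ennreal (dV * (chi ((0 + \<delta> * \<rho>) / \<delta>) * (0 + \<delta> * \<rho>) powr (1 - 2*\<alpha>))) * indicator {0..} (0 + \<delta> * \<rho>) \<partial>lborel)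
     = (\<integral>\<^sup>+\<rho>. ennreal (dV * \<delta> powr (1 - 2*\<alpha>)) * (ennreal (chi \<rho> * \<rho> powr (1 - 2*\<alpha>)) * indicator {0..1} \<rho>) \<partial>lborel)"
  proof (intro nn_integral_cong)
    fix \<rho> :: real
    show "ennreal (dV * (chi ((0 + \<delta> * \<rho>) / \<delta>) * (0 + \<delta> * \<rho>) powr (1 - 2*\<alpha>))) * indicator {0..} (0 + \<delta> * \<rho>)
      = ennreal (dV * \<delta> powr (1 - 2*\<alpha>)) * (ennreal (chi \<rho> * \<rho> powr (1 - 2*\<alpha>)) * indicator {0..1} \<rho>)"
    proof (cases "\<rho> < 0")
      case True
      then have "\<delta> * \<rho> < 0" using d by (simp add: mult_pos_neg)
      then show ?thesis using True by (simp add: indicator_def)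
    next
      case False
      show ?thesis
      proof (cases "\<rho> > 1")
        case True
        then show ?thesis using out[of \<rho>] d by (simp add: indicator_def)
      next
        case False2: False
        have "dV * (chi \<rho> * (\<delta> * \<rho>) powr (1 - 2*\<alpha>)) = dV * \<delta> powr (1 - 2*\<alpha>) * (chi \<rho> * \<rho> powr (1 - 2*\<alpha>))"
          using False d by (simp add: powr_mult)
        moreover have "0 \<le> \<delta> * \<rho>" using False d by simp
        ultimately show ?thesis using False False2 d dV nn[of \<rho>]
          by (simp add: indicator_def ennreal_mult'[symmetric] mult.assoc)
      qed
    qed
  qed
  also have "\<dots> = ennreal (dV * \<delta> powr (1 - 2*\<alpha>)) * (\<integral>\<^sup>+\<rho>. ennreal (chi \<rho> * \<rho> powr (1 - 2*\<alpha>)) * indicator {0..1} \<rho> \<partial>lborel)"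
    by (rule nn_integral_cmult) measurable
  also have "ennreal \<delta> * (ennreal (dV * \<delta> powr (1 - 2*\<alpha>)) * (\<integral>\<^sup>+\<rho>. ennreal (chi \<rho> * \<rho> powr (1 - 2*\<alpha>)) * indicator {0..1} \<rho> \<partial>lborel))
    = ennreal (dV * \<delta> powr (2*(1-\<alpha>))) * (\<integral>\<^sup>+\<rho>. ennreal (chi \<rho> * \<rho> powr (1 - 2*\<alpha>)) * indicator {0..1} \<rho> \<partial>lborel)"
  proof -
    have "\<delta> * (dV * \<delta> powr (1 - 2*\<alpha>)) = dV * \<delta> powr (2*(1-\<alpha>))"
    proof -
      have "\<delta> * (dV * \<delta> powr (1 - 2*\<alpha>)) = dV * (\<delta> powr 1 * \<delta> powr (1 - 2*\<alpha>))"
        using d by simp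
      also have "\<delta> powr 1 * \<delta> powr (1 - 2*\<alpha>) = \<delta> powr (1 + (1 - 2*\<alpha>))"
        by (simp only: powr_add)
      also have "1 + (1 - 2*\<alpha>) = 2*(1-\<alpha>)" by simp
      finally show ?thesis .
    qed
    note e = this
    have "ennreal \<delta> * (ennreal (dV * \<delta> powr (1 - 2*\<alpha>)) * (\<integral>\<^sup>+\<rho>. ennreal (chi \<rho> * \<rho> powr (1 - 2*\<alpha>)) * indicator {0..1} \<rho> \<partial>lborel))
      = ennreal (\<delta> * (dV * \<delta> powr (1 - 2*\<alpha>))) * (\<integral>\<^sup>+\<rho>. ennreal (chi \<rho> * \<rho> powr (1 - 2*\<alpha>)) * indicator {0..1} \<rho> \<partial>lborel)"
      using d by (simp add: ennreal_mult' mult.assoc)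
    then show ?thesis by (simp only: e)
  qed
  finally show ?thesis by (simp add: dV_def)
qed





lemma final_arith:
  fixes a b e :: real
  assumes "0 \<le> a" "0 \<le> b" "b^2 \<le> a^2" "a^2 - b^2 \<le> e^2" "0 \<le> e"
  shows "\<bar>b - a\<bar> \<le> e"
proof -
  have ba: "b \<le> a" using assms power2_le_imp_le by blast
  have "(a - b)^2 \<le> (a - b) * (a + b)"
    using ba assms by (simp add: power2_eq_square mult_left_mono)
  also have "\<dots> = a^2 - b^2" by (simp add: power2_eq_square algebra_simps)
  finally have "(a - b)^2 \<le> e^2" using assms by linarith
  then have "a - b \<le> e" using assms power2_le_imp_le by blast
  then show ?thesis using ba by simp
qed

theorem mainTheorem10:
  fixes \<kappa> \<alpha> :: real and chi :: "real \<Rightarrow> real"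
  assumes "0 < \<kappa>" and "0 < \<alpha>" and "\<alpha> < 1"
    and "chi \<in> borel_measurable borel"
    and "\<And>x. 0 \<le> chi x" and "\<And>x. chi x \<le> 1"
    and "\<And>x. \<bar>x\<bar> > 1 \<Longrightarrow> chi x = 0"
    and "\<And>x. \<bar>x\<bar> \<le> 1/2 \<Longrightarrow> chi x = 1"
  shows "\<exists>C>0. \<forall>\<delta>>0. \<forall>\<xi>::'a::euclidean_space.
           \<bar>omega_delta \<kappa> \<alpha> chi \<delta> \<xi> - gamma_const TYPE('a) \<kappa> \<alpha> chi * norm \<xi>\<bar>
             \<le> C * \<delta> * (norm \<xi>)\<^sup>2"
proof -
  note chi_m[measurable] = assms(4)
  define V where "V = measure lborel (ball (0::'a) 1)"
  define J where "J = (LBINT \<rho>=0..1. chi \<rho> * \<rho> powr (1 - 2*\<alpha>))"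
  define J0 where "J0 = (\<integral>\<^sup>+\<rho>. ennreal (chi \<rho> * \<rho> powr (1 - 2*\<alpha>)) * indicator {0..1} \<rho> \<partial>lborel)"
  define \<gamma> where "\<gamma> = gamma_const TYPE('a) \<kappa> \<alpha> chi"
  have J0fin: "J0 < \<infinity>" unfolding J0_def using J_props(1)[OF assms(4,5,6,3)] .
  have JJ0: "J = enn2real J0" unfolding J_def J0_def using J_props(2)[OF assms(4,5,6,3)] .
  have V0: "0 \<le> V" by (simp add: V_def)
  have Jnn: "0 \<le> J" by (simp add: JJ0)
  have \<gamma>2: "\<gamma>^2 = \<kappa> / 2 * V * J"
  proof -
    have nnarg: "0 \<le> \<kappa> / 2 * V * J" using assms(1) V0 Jnn by simp
    have "\<gamma> = sqrt (\<kappa> / 2 * V * J)"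
      unfolding \<gamma>_def gamma_const_def V_def J_def ..
    then show ?thesis using nnarg by simp
  qed
  have \<gamma>0: "0 \<le> \<gamma>"
  proof -
    have nnarg: "0 \<le> \<kappa> / 2 * V * J" using assms(1) V0 Jnn by simp
    have "\<gamma> = sqrt (\<kappa> / 2 * V * J)"
      unfolding \<gamma>_def gamma_const_def V_def J_def ..
    then show ?thesis using nnarg by simp
  qed
  have main: "\<bar>omega_delta \<kappa> \<alpha> chi \<delta> \<xi> - \<gamma> * norm \<xi>\<bar> \<le> \<gamma> * \<delta> * (norm \<xi>)\<^sup>2"
    if d: "\<delta> > 0" for \<delta> and \<xi> :: 'a
  proof -
    define s where "s = norm \<xi>"
    define \<beta> where "\<beta> = real DIM('a) + 2*\<alpha>"
    define F where "F r = chi (r / \<delta>) / r powr \<beta>" for r :: real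
    define P where "P = \<delta> powr (2*(1-\<alpha>))"
    have P0: "P > 0" using d by (simp add: P_def)
    have Fm[measurable]: "F \<in> borel_measurable borel" unfolding F_def by measurable
    have Fnn: "0 \<le> F r" for r using assms(5) by (simp add: F_def)
    have nnI: "(\<integral>\<^sup>+y. ennreal (F (norm y) * (norm y)^2) \<partial>(lborel::'a measure))
        = ennreal (real DIM('a) * V * P) * J0"
      using radial_J[OF assms(4,5,6,2,3,7) d, where 'a='a] by (simp add: F_def \<beta>_def V_def P_def J0_def)
    have Fint: "integrable lborel (\<lambda>y::'a. F (norm y) * (norm y)^2)"
      by (rule integrableI_nonneg) (use J0fin in \<open>auto simp: nnI Fnn ennreal_mult_less_top top.not_eq_extremum\<close>)
    have FI: "integral\<^sup>L lborel (\<lambda>y::'a. F (norm y) * (norm y)^2) = real DIM('a) * V * P * J"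
      by (subst integral_eq_nn_integral) (auto simp: nnI Fnn JJ0 enn2real_mult V0 P0 less_imp_le)
    define Q where "Q = integral\<^sup>L lborel (\<lambda>y::'a. F (norm y) * (y \<bullet> \<xi>)^2)"
    have Qv: "Q = s^2 * V * P * J"
      unfolding Q_def s_def using quad_formula[OF Fm Fint, of \<xi>] FI by simp
    have Qint: "integrable lborel (\<lambda>y::'a. F (norm y) * (y \<bullet> \<xi>)^2)"
    proof (rule Bochner_Integration.integrable_bound[OF integrable_mult_right[OF Fint, of "s^2"]])
      show "AE y in lborel. norm (F (norm y) * (y \<bullet> \<xi>)^2) \<le> norm (s^2 * (F (norm y) * (norm y)^2))"
      proof (intro AE_I2)
        fix y :: 'a
        have "\<bar>y \<bullet> \<xi>\<bar> \<le> norm y * s" unfolding s_def by (rule Cauchy_Schwarz_ineq2)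
        then have "(y \<bullet> \<xi>)^2 \<le> (norm y * s)^2" by (metis abs_ge_zero power2_abs power_mono)
        then have "F (norm y) * (y \<bullet> \<xi>)^2 \<le> F (norm y) * (norm y * s)^2" by (rule mult_left_mono) (rule Fnn)
        then show "norm (F (norm y) * (y \<bullet> \<xi>)^2) \<le> norm (s^2 * (F (norm y) * (norm y)^2))"
          using Fnn[of "norm y"] by (simp add: power_mult_distrib mult_ac)
      qed
    qed measurable
    define \<phi> where "\<phi> y = chi (norm y / \<delta>) * (1 - cos (y \<bullet> \<xi>)) / norm y powr \<beta>" for y :: 'a
    have \<phi>F: "\<phi> y = F (norm y) * (1 - cos (y \<bullet> \<xi>))" for y
      by (simp add: \<phi>_def F_def)
    have \<phi>nn: "0 \<le> \<phi> y" for y unfolding \<phi>F using Fnn by simp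
    have \<phi>up: "\<phi> y \<le> F (norm y) * (y \<bullet> \<xi>)^2 / 2" for y
      unfolding \<phi>F using mult_left_mono[OF one_minus_cos_le Fnn] by simp
    have \<phi>lo: "(1/2 - \<delta>^2 * s^2 / 24) * (F (norm y) * (y \<bullet> \<xi>)^2) \<le> \<phi> y" for y
    proof (cases "chi (norm y / \<delta>) = 0")
      case True then show ?thesis by (simp add: \<phi>_def F_def)
    next
      case False
      then have "\<bar>norm y / \<delta>\<bar> \<le> 1" using assms(7) by force
      then have ny: "norm y \<le> \<delta>" using d by simp
      have "\<bar>y \<bullet> \<xi>\<bar> \<le> norm y * s" unfolding s_def by (rule Cauchy_Schwarz_ineq2)
      also have "\<dots> \<le> \<delta> * s" using ny by (simp add: s_def mult_right_mono)
      finally have "\<bar>y \<bullet> \<xi>\<bar> \<le> \<delta> * s" .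
      then have t2: "(y \<bullet> \<xi>)^2 \<le> (\<delta> * s)^2" by (metis abs_ge_zero power2_abs power_mono)
      have "(1/2 - \<delta>^2 * s^2 / 24) * (y \<bullet> \<xi>)^2 \<le> (y \<bullet> \<xi>)^2 / 2 - (y \<bullet> \<xi>)^4 / 24"
      proof -
        have "(y \<bullet> \<xi>)^4 = (y \<bullet> \<xi>)^2 * (y \<bullet> \<xi>)^2" by algebra
        also have "\<dots> \<le> (y \<bullet> \<xi>)^2 * (\<delta> * s)^2" by (rule mult_left_mono[OF t2]) simp
        finally show ?thesis by (simp add: algebra_simps power_mult_distrib)
      qed
      also have "\<dots> \<le> 1 - cos (y \<bullet> \<xi>)" by (rule one_minus_cos_ge)
      finally have "(1/2 - \<delta>^2 * s^2 / 24) * (y \<bullet> \<xi>)^2 \<le> 1 - cos (y \<bullet> \<xi>)" .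
      then have "F (norm y) * ((1/2 - \<delta>^2 * s^2 / 24) * (y \<bullet> \<xi>)^2) \<le> F (norm y) * (1 - cos (y \<bullet> \<xi>))"
        by (rule mult_left_mono) (rule Fnn)
      then show ?thesis unfolding \<phi>F by (simp add: mult_ac)
    qed
    have \<phi>m[measurable]: "\<phi> \<in> borel_measurable borel" unfolding \<phi>_def \<beta>_def by measurable
    have \<phi>int: "integrable lborel \<phi>"
    proof (rule Bochner_Integration.integrable_bound[OF Qint])
      show "AE y in lborel. norm (\<phi> y) \<le> norm (F (norm y) * (y \<bullet> \<xi>)^2)"
      proof (intro AE_I2)
        fix y :: 'a
        show "norm (\<phi> y) \<le> norm (F (norm y) * (y \<bullet> \<xi>)^2)"
          using \<phi>nn[of y] \<phi>up[of y] Fnn[of "norm y"] by simp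
      qed
    qed measurable
    define A where "A = integral\<^sup>L lborel \<phi>"
    have A0: "0 \<le> A" unfolding A_def using \<phi>nn by (simp add: integral_nonneg_AE)
    have Aup: "A \<le> Q / 2"
    proof -
      have "A \<le> integral\<^sup>L lborel (\<lambda>y::'a. F (norm y) * (y \<bullet> \<xi>)^2 / 2)"
        unfolding A_def by (intro integral_mono \<phi>int \<phi>up integrable_divide Qint)
      then show ?thesis by (simp add: Q_def)
    qed
    have Alo: "(1/2 - \<delta>^2 * s^2 / 24) * Q \<le> A"
    proof -
      have "integral\<^sup>L lborel (\<lambda>y::'a. (1/2 - \<delta>^2 * s^2 / 24) * (F (norm y) * (y \<bullet> \<xi>)^2)) \<le> A"
        unfolding A_def by (intro integral_mono \<phi>int \<phi>lo integrable_mult_right Qint)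
      then show ?thesis by (simp add: Q_def)
    qed
    have om: "omega_delta \<kappa> \<alpha> chi \<delta> \<xi> = sqrt (\<kappa> / P * A)"
    proof -
      have "\<phi> = (\<lambda>y. chi (norm y / \<delta>) * (1 - cos (y \<bullet> \<xi>)) / norm y powr (real DIM('a) + 2 * \<alpha>))"
        by (rule ext) (simp add: \<phi>_def \<beta>_def)
      then show ?thesis by (simp add: omega_delta_def A_def P_def)
    qed
    define w where "w = omega_delta \<kappa> \<alpha> chi \<delta> \<xi>"
    have w2: "w^2 = \<kappa> / P * A" unfolding w_def om using assms(1) P0 A0 by (simp add: less_imp_le)
    have w0: "0 \<le> w" unfolding w_def om using assms(1) P0 A0 by (simp add: less_imp_le)
    have key: "\<kappa> / P * Q = 2 * (\<gamma> * s)^2"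
      using Qv \<gamma>2 P0 by (simp add: power_mult_distrib field_simps)
    have k0: "0 \<le> \<kappa> / P" using assms(1) P0 by simp
    have up: "w^2 \<le> (\<gamma> * s)^2"
    proof -
      have "w^2 = \<kappa> / P * A" by (rule w2)
      also have "\<dots> \<le> \<kappa> / P * (Q / 2)" by (rule mult_left_mono[OF Aup k0])
      also have "\<dots> = (\<kappa> / P * Q) / 2" by simp
      also have "\<dots> = (\<gamma> * s)^2" by (simp only: key)
      finally show ?thesis .
    qed
    have lo: "(\<gamma> * s)^2 - w^2 \<le> (\<gamma> * \<delta> * s^2)^2"
    proof -
      have "(1/2 - \<delta>^2 * s^2 / 24) * (2 * (\<gamma> * s)^2) = (1/2 - \<delta>^2 * s^2 / 24) * (\<kappa> / P * Q)"
        by (simp only: key)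
      also have "\<dots> = \<kappa> / P * ((1/2 - \<delta>^2 * s^2 / 24) * Q)" by (simp only: mult_ac)
      also have "\<dots> \<le> \<kappa> / P * A" by (rule mult_left_mono[OF Alo k0])
      also have "\<dots> = w^2" by (simp only: w2)
      finally have "(1/2 - \<delta>^2 * s^2 / 24) * (2 * (\<gamma> * s)^2) \<le> w^2" .
      then have "(\<gamma> * s)^2 - w^2 \<le> (\<gamma> * s)^2 * (\<delta>^2 * s^2) / 12" by (simp add: algebra_simps)
      also have "\<dots> \<le> (\<gamma> * s)^2 * (\<delta>^2 * s^2)" by simp
      also have "\<dots> = (\<gamma> * \<delta> * s^2)^2" by (simp add: power_mult_distrib power2_eq_square)
      finally show ?thesis .
    qed
    have "\<bar>w - \<gamma> * s\<bar> \<le> \<gamma> * \<delta> * s^2"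
      by (rule final_arith) (use \<gamma>0 w0 up lo d in \<open>auto simp: s_def\<close>)
    then show ?thesis by (simp add: w_def s_def)
  qed
  show ?thesis
  proof (intro exI[of _ "\<gamma> + 1"] conjI allI impI)
    show "0 < \<gamma> + 1" using \<gamma>0 by simp
    fix \<delta> :: real and \<xi> :: 'a assume d: "0 < \<delta>"
    have "\<gamma> * \<delta> * (norm \<xi>)^2 \<le> (\<gamma> + 1) * \<delta> * (norm \<xi>)^2"
      using d by (intro mult_right_mono) auto
    then show "\<bar>omega_delta \<kappa> \<alpha> chi \<delta> \<xi> - gamma_const TYPE('a) \<kappa> \<alpha> chi * norm \<xi>\<bar> \<le> (\<gamma> + 1) * \<delta> * (norm \<xi>)^2"
      using main[OF d, of \<xi>] by (simp add: \<gamma>_def)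
  qed
qed



end
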